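(* Let $\{\Pi_i\}_{i=1}^n$ be a qubit POVM written as $\Pi_i=\alpha_i(\mathbb{I}+\eta_i\hat n_i\cdot\vec\sigma)$ with $\alpha_i\ge0$, $\eta_i\in[0,1]$, $\hat n_i$ unit vectors, $\sum_i\alpha_i=1$, $\sum_i\alpha_i\eta_i\hat n_i=\vec0$. Then $$R(\{\Pi_i\})=\inf_{\substack{\vec c\in\mathbb{R}^3,\ |\vec c|=1\\ c_0\in[-1,1]}}\ \sum_{i=1}^n\bigl|\alpha_i(c_0+\eta_i\,\vec c\cdot\hat n_i)\bigr|.$$
   Context: A POVM $\{\Pi_i\}$ simulates a family $\{M_{a|x}\}$ if $M_{a|x}=\sum_i p(a|x,i)\Pi_i$ with $p(a|x,i)\ge0$, $\sum_a p(a|x,i)=1$. $\mathcal{P}_r$ is the family of two-outcome POVMs $\{\tfrac12(\mathbb{I}\pm r\hat n\cdot\vec\sigma)\}$ over all unit $\hat n\in\mathbb{R}^3$. $R(\{\Pi_i\})$ is the largest $r$ such that $\{\Pi_i\}$ simulates $\mathcal{P}_r$. *)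

theory Defs
  imports "HOL-Analysis.Analysis"
begin

definition pauli :: "3 \<Rightarrow> complex^2^2" where
  "pauli k = (\<chi> i j.
     if k = 1 then (if i = j then 0 else 1)
     else if k = 2 then (if i = j then 0 else if i = 1 then - \<i> else \<i>)
     else (if i \<noteq> j then 0 else if i = 1 then 1 else -1))"

definition sigma_dot :: "real^3 \<Rightarrow> complex^2^2" where
  "sigma_dot v = (\<Sum>k\<in>UNIV. (v $ k) *\<^sub>R pauli k)"

definition bloch_effect :: "real \<Rightarrow> real \<Rightarrow> real^3 \<Rightarrow> complex^2^2" where
  "bloch_effect \<alpha> \<eta> v = \<alpha> *\<^sub>R (mat 1 + \<eta> *\<^sub>R sigma_dot v)"

definition simulates ::
  "nat \<Rightarrow> (nat \<Rightarrow> complex^2^2) \<Rightarrow> 'x set \<Rightarrow> 'a set \<Rightarrow> ('x \<Rightarrow> 'a \<Rightarrow> complex^2^2) \<Rightarrow> bool" where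
  "simulates n Pv X A M \<longleftrightarrow>
     (\<exists>p :: 'x \<Rightarrow> 'a \<Rightarrow> nat \<Rightarrow> real.
        (\<forall>x\<in>X. \<forall>i\<in>{1..n}. (\<forall>a\<in>A. p x a i \<ge> 0) \<and> (\<Sum>a\<in>A. p x a i) = 1) \<and>
        (\<forall>x\<in>X. \<forall>a\<in>A. M x a = (\<Sum>i=1..n. p x a i *\<^sub>R Pv i)))"

text \<open>The family P_r: x ranges over unit vectors, outcomes a in {+,-} (True = +).\<close>
definition P_family :: "real \<Rightarrow> real^3 \<Rightarrow> bool \<Rightarrow> complex^2^2" where
  "P_family r v a = (1/2) *\<^sub>R (mat 1 + (if a then r else - r) *\<^sub>R sigma_dot v)"

definition unit_sphere3 :: "(real^3) set" where
  "unit_sphere3 = {v. norm v = 1}"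

definition R_param :: "nat \<Rightarrow> (nat \<Rightarrow> complex^2^2) \<Rightarrow> real" where
  "R_param n Pv = Sup {r. simulates n Pv unit_sphere3 UNIV (P_family r)}"

end

theory Submission imports Defs begin

lemma linear_sigma_dot: "linear sigma_dot"
  unfolding sigma_dot_def
  by (intro linearI) (auto simp: scaleR_add_left sum.distrib scaleR_sum_right)

lemma sd_entries:
  "(a *\<^sub>R mat 1 + sigma_dot u) $ 1 $ 1 = complex_of_real (a + u$3)"
  "(a *\<^sub>R mat 1 + sigma_dot u) $ 2 $ 2 = complex_of_real (a - u$3)"
  "(a *\<^sub>R mat 1 + sigma_dot u) $ 1 $ 2 = Complex (u$1) (- u$2)"
  unfolding sigma_dot_def pauli_def
  by (simp_all add: sum_3 mat_def complex_eq_iff)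

lemma sd_inj:
  assumes "a *\<^sub>R mat 1 + sigma_dot u = b *\<^sub>R mat 1 + sigma_dot w"
  shows "a = b \<and> u = w"
proof -
  have e1: "a + u$3 = b + w$3" using arg_cong[OF assms, of "\<lambda>M. M$1$1"] by (simp only: sd_entries of_real_add[symmetric] of_real_diff[symmetric] of_real_eq_iff)
  have e2: "a - u$3 = b - w$3" using arg_cong[OF assms, of "\<lambda>M. M$2$2"] by (simp only: sd_entries of_real_add[symmetric] of_real_diff[symmetric] of_real_eq_iff)
  have e3: "Complex (u$1) (- u$2) = Complex (w$1) (- w$2)" using arg_cong[OF assms, of "\<lambda>M. M$1$2"] by (simp only: sd_entries)
  have "u$1 = w$1" "u$2 = w$2" using e3 by auto
  moreover have "u$3 = w$3" "a = b" using e1 e2 by auto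
  ultimately show ?thesis by (auto simp: vec_eq_iff forall_3)
qed
lemma decomp:
  "(\<Sum>i=1..n. p i *\<^sub>R bloch_effect (\<alpha> i) (\<eta> i) (nv i)) =
   (\<Sum>i=1..n. p i * \<alpha> i) *\<^sub>R mat 1 + sigma_dot (\<Sum>i=1..n. (p i * \<alpha> i * \<eta> i) *\<^sub>R nv i)"
proof -
  have l: "linear sigma_dot" by (rule linear_sigma_dot)
  have "sigma_dot (\<Sum>i=1..n. (p i * \<alpha> i * \<eta> i) *\<^sub>R nv i) =
     (\<Sum>i=1..n. (p i * \<alpha> i * \<eta> i) *\<^sub>R sigma_dot (nv i))"
    by (simp add: linear_sum[OF l] linear_scale[OF l])
  then show ?thesis
    by (simp add: bloch_effect_def scaleR_add_right sum.distrib scaleR_sum_left mult.assoc)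
qed

lemma pfam: "P_family r v a = (1/2) *\<^sub>R mat 1 + sigma_dot (((if a then r else - r)/2) *\<^sub>R v)"
  unfolding P_family_def by (simp add: linear_scale[OF linear_sigma_dot] scaleR_add_right)


definition Kset :: "nat set \<Rightarrow> (nat \<Rightarrow> 'a::real_normed_vector) \<Rightarrow> 'a set" where
  "Kset I w = {\<Sum>i\<in>I. q i *\<^sub>R w i | q. \<forall>i\<in>I. -1 \<le> q i \<and> q i \<le> 1}"

lemma Kset_insert:
  assumes "j \<notin> I" "finite I"
  shows "Kset (insert j I) w = (\<lambda>(t,y). t *\<^sub>R w j + y) ` ({-1..1} \<times> Kset I w)"
proof
  show "Kset (insert j I) w \<subseteq> (\<lambda>(t,y). t *\<^sub>R w j + y) ` ({-1..1} \<times> Kset I w)"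
  proof
    fix x assume "x \<in> Kset (insert j I) w"
    then obtain q where q: "\<forall>i\<in>insert j I. -1 \<le> q i \<and> q i \<le> 1" "x = (\<Sum>i\<in>insert j I. q i *\<^sub>R w i)"
      unfolding Kset_def by blast
    have "x = q j *\<^sub>R w j + (\<Sum>i\<in>I. q i *\<^sub>R w i)" using q(2) assms by simp
    moreover have "(\<Sum>i\<in>I. q i *\<^sub>R w i) \<in> Kset I w" using q(1) unfolding Kset_def by blast
    ultimately show "x \<in> (\<lambda>(t,y). t *\<^sub>R w j + y) ` ({-1..1} \<times> Kset I w)"
      using q(1) by force
  qed
next
  show "(\<lambda>(t,y). t *\<^sub>R w j + y) ` ({-1..1} \<times> Kset I w) \<subseteq> Kset (insert j I) w"
  proof clarsimp
    fix t :: real and y assume t: "-1 \<le> t" "t \<le> 1" and y: "y \<in> Kset I w"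
    then obtain q where q: "\<forall>i\<in>I. -1 \<le> q i \<and> q i \<le> 1" "y = (\<Sum>i\<in>I. q i *\<^sub>R w i)"
      unfolding Kset_def by blast
    define q' where "q' = q(j := t)"
    have "(\<Sum>i\<in>I. q' i *\<^sub>R w i) = (\<Sum>i\<in>I. q i *\<^sub>R w i)"
      using assms(1) by (intro sum.cong) (auto simp: q'_def)
    then have "t *\<^sub>R w j + y = (\<Sum>i\<in>insert j I. q' i *\<^sub>R w i)"
      using assms q(2) by (simp add: q'_def)
    moreover have "\<forall>i\<in>insert j I. -1 \<le> q' i \<and> q' i \<le> 1" using q(1) t by (auto simp: q'_def)
    ultimately show "t *\<^sub>R w j + y \<in> Kset (insert j I) w" unfolding Kset_def by blast
  qed
qed

lemma Kset_compact:
  fixes w :: "nat \<Rightarrow> 'a::real_normed_vector"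
  assumes "finite I" shows "compact (Kset I w)"
  using assms
proof (induction I rule: finite_induct)
  case empty
  have "Kset {} w = {0}" unfolding Kset_def by auto
  then show ?case by simp
next
  case (insert j I)
  have "compact ({-1..1::real} \<times> Kset I w)" using insert by (intro compact_Times) auto
  moreover have "continuous_on ({-1..1::real} \<times> Kset I w) (\<lambda>(t,y). t *\<^sub>R w j + y)"
    unfolding case_prod_unfold by (intro continuous_intros)
  ultimately show ?case using insert by (simp add: Kset_insert compact_continuous_image)
qed

lemma Kset_convex: "convex (Kset I w)"
  unfolding convex_def
proof (intro allI impI ballI)
  fix x y and u v :: real
  assume x: "x \<in> Kset I w" and y: "y \<in> Kset I w" and uv: "0 \<le> u" "0 \<le> v" "u + v = 1"
  obtain q where q: "\<forall>i\<in>I. -1 \<le> q i \<and> q i \<le> 1" "x = (\<Sum>i\<in>I. q i *\<^sub>R w i)"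
    using x unfolding Kset_def by blast
  obtain q' where q': "\<forall>i\<in>I. -1 \<le> q' i \<and> q' i \<le> 1" "y = (\<Sum>i\<in>I. q' i *\<^sub>R w i)"
    using y unfolding Kset_def by blast
  have "u *\<^sub>R x + v *\<^sub>R y = (\<Sum>i\<in>I. (u * q i + v * q' i) *\<^sub>R w i)"
    by (simp add: q(2) q'(2) scaleR_sum_right sum.distrib[symmetric] scaleR_add_left)
  moreover have "\<forall>i\<in>I. -1 \<le> u * q i + v * q' i \<and> u * q i + v * q' i \<le> 1"
  proof
    fix i assume i: "i \<in> I"
    have "u * (-1) \<le> u * q i" "u * q i \<le> u * 1" using mult_left_mono[of "-1" "q i" u] mult_left_mono[of "q i" 1 u] q(1) i uv by auto
    moreover have "v * (-1) \<le> v * q' i" "v * q' i \<le> v * 1" using mult_left_mono[of "-1" "q' i" v] mult_left_mono[of "q' i" 1 v] q'(1) i uv by auto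
    ultimately show "-1 \<le> u * q i + v * q' i \<and> u * q i + v * q' i \<le> 1" using uv by linarith
  qed
  ultimately show "u *\<^sub>R x + v *\<^sub>R y \<in> Kset I w" unfolding Kset_def
    by (intro CollectI exI[of _ "\<lambda>i. u * q i + v * q' i"]) blast
qed


theorem theorem3:
  fixes n :: nat and \<alpha> \<eta> :: "nat \<Rightarrow> real" and nv :: "nat \<Rightarrow> real^3"
  assumes "\<forall>i\<in>{1..n}. \<alpha> i \<ge> 0"
    and "\<forall>i\<in>{1..n}. 0 \<le> \<eta> i \<and> \<eta> i \<le> 1"
    and "\<forall>i\<in>{1..n}. norm (nv i) = 1"
    and "(\<Sum>i=1..n. \<alpha> i) = 1"
    and "(\<Sum>i=1..n. (\<alpha> i * \<eta> i) *\<^sub>R nv i) = 0"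
  shows "R_param n (\<lambda>i. bloch_effect (\<alpha> i) (\<eta> i) (nv i)) =
    (INF cc \<in> {(c0, c). norm c = 1 \<and> c0 \<in> {-1..1}}.
       (\<Sum>i=1..n. \<bar>\<alpha> i * (fst cc + \<eta> i * (snd cc \<bullet> nv i))\<bar>))"
proof -
  note A = assms
  define f where "f d0 d = (\<Sum>i=1..n. \<bar>\<alpha> i * (d0 + \<eta> i * (d \<bullet> nv i))\<bar>)" for d0 and d :: "real^3"
  define S :: "(real \<times> (real^3)) set" where "S = {(c0, c). norm c = 1 \<and> c0 \<in> {-1..1}}"
  define m where "m = (INF cc \<in> S. f (fst cc) (snd cc))"
  have m_eq: "(INF cc \<in> {(c0, c). norm c = 1 \<and> c0 \<in> {-1..1}}.
       (\<Sum>i=1..n. \<bar>\<alpha> i * (fst cc + \<eta> i * (snd cc \<bullet> nv i))\<bar>)) = m"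
    unfolding m_def S_def f_def by simp
  define Pv where "Pv = (\<lambda>i. bloch_effect (\<alpha> i) (\<eta> i) (nv i))"
  define Sim where "Sim = {r. simulates n Pv unit_sphere3 UNIV (P_family r)}"
  have e1: "norm (axis 1 1 :: real^3) = 1" by simp
  have "(0, axis 1 1) \<in> S" unfolding S_def using e1 by simp
  then have Sne: "S \<noteq> {}" by blast
  have fnn: "0 \<le> f d0 d" for d0 d unfolding f_def by (intro sum_nonneg) auto
  have bdd: "bdd_below ((\<lambda>cc. f (fst cc) (snd cc)) ` S)" using fnn by (intro bdd_belowI2) auto
  have m0: "0 \<le> m" unfolding m_def using Sne fnn by (intro cINF_greatest) auto
  have zero: "(\<Sum>i=1..n. \<alpha> i * \<eta> i * (c \<bullet> nv i)) = 0" for c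
  proof -
    have "(\<Sum>i=1..n. \<alpha> i * \<eta> i * (c \<bullet> nv i)) = c \<bullet> (\<Sum>i=1..n. (\<alpha> i * \<eta> i) *\<^sub>R nv i)"
      by (simp add: inner_sum_right)
    then show ?thesis using A(5) by simp
  qed
  have sumc: "(\<Sum>i=1..n. \<alpha> i * (c0 + \<eta> i * (c \<bullet> nv i))) = c0" for c0 c
  proof -
    have "(\<Sum>i=1..n. \<alpha> i * (c0 + \<eta> i * (c \<bullet> nv i))) =
        c0 * (\<Sum>i=1..n. \<alpha> i) + (\<Sum>i=1..n. \<alpha> i * \<eta> i * (c \<bullet> nv i))"
      by (simp add: algebra_simps sum.distrib sum_distrib_left)
    then show ?thesis using zero A(4) by simp
  qed
  have f1: "f 1 c = 1" if c: "norm c = 1" for c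
  proof -
    have "\<bar>\<alpha> i * (1 + \<eta> i * (c \<bullet> nv i))\<bar> = \<alpha> i * (1 + \<eta> i * (c \<bullet> nv i))" if i: "i \<in> {1..n}" for i
    proof -
      have "\<bar>c \<bullet> nv i\<bar> \<le> 1" using Cauchy_Schwarz_ineq2[of c "nv i"] c A(3) i by simp
      moreover have "0 \<le> \<eta> i" "\<eta> i \<le> 1" using A(2) i by auto
      ultimately have "\<bar>\<eta> i * (c \<bullet> nv i)\<bar> \<le> 1"
        by (simp add: abs_mult mult_le_one)
      then show ?thesis using A(1) i by auto
    qed
    then have "f 1 c = (\<Sum>i=1..n. \<alpha> i * (1 + \<eta> i * (c \<bullet> nv i)))" unfolding f_def by (intro sum.cong) auto
    then show ?thesis using sumc by simp
  qed
  have m1: "m \<le> 1"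
  proof -
    have "m \<le> f (fst (1, axis 1 1)) (snd (1, axis 1 1))" unfolding m_def
      using cINF_lower[OF bdd, of "(1, axis 1 1)"] by (simp add: S_def)
    then show ?thesis using f1[OF e1] by simp
  qed
  have mle: "m \<le> f c0 c" if c: "norm c = 1" for c0 c
  proof (cases "c0 \<in> {-1..1}")
    case True
    have "m \<le> f (fst (c0, c)) (snd (c0, c))" unfolding m_def
      using cINF_lower[OF bdd, of "(c0, c)"] True c by (simp add: S_def)
    then show ?thesis by simp
  next
    case False
    have "\<bar>c0\<bar> \<le> f c0 c" unfolding f_def using sum_abs[of "\<lambda>i. \<alpha> i * (c0 + \<eta> i * (c \<bullet> nv i))" "{1..n}"]
      by (simp only: sumc)
    then show ?thesis using False m1 by auto
  qed
  have mnorm: "m * norm d \<le> f d0 d" for d0 d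
  proof (cases "d = 0")
    case True then show ?thesis using fnn by simp
  next
    case False
    define t where "t = norm d"
    have t: "t > 0" using False by (simp add: t_def)
    have "f d0 d = t * f (d0 / t) (d /\<^sub>R t)" unfolding f_def sum_distrib_left
    proof (intro sum.cong refl)
      fix i
      have "\<alpha> i * (d0 + \<eta> i * (d \<bullet> nv i)) = t * (\<alpha> i * (d0 / t + \<eta> i * ((d /\<^sub>R t) \<bullet> nv i)))"
        using t by (simp add: field_simps)
      then show "\<bar>\<alpha> i * (d0 + \<eta> i * (d \<bullet> nv i))\<bar> = t * \<bar>\<alpha> i * (d0 / t + \<eta> i * ((d /\<^sub>R t) \<bullet> nv i))\<bar>"
        using t by (metis abs_mult abs_of_pos)
    qed
    moreover have "m \<le> f (d0 / t) (d /\<^sub>R t)" using t by (intro mle) (simp add: t_def)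
    ultimately show ?thesis using t by (simp add: t_def)
  qed
  have upper: "r \<le> m" if r: "r \<in> Sim" for r
    unfolding m_def
  proof (rule cINF_greatest[OF Sne])
    fix cc assume cc: "cc \<in> S"
    obtain c0 c where cc': "cc = (c0, c)" "norm c = 1" "c0 \<in> {-1..1}" using cc unfolding S_def by auto
    obtain p :: "real^3 \<Rightarrow> bool \<Rightarrow> nat \<Rightarrow> real" where
      p1: "\<forall>x\<in>unit_sphere3. \<forall>i\<in>{1..n}. (\<forall>a\<in>UNIV. p x a i \<ge> 0) \<and> (\<Sum>a\<in>UNIV. p x a i) = 1" and
      p2: "\<forall>x\<in>unit_sphere3. \<forall>a\<in>UNIV. P_family r x a = (\<Sum>i=1..n. p x a i *\<^sub>R Pv i)"
      using r unfolding Sim_def simulates_def by blast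
    have cu: "c \<in> unit_sphere3" using cc' by (simp add: unit_sphere3_def)
    define P where "P i = p c True i" for i
    have Pb: "0 \<le> P i \<and> P i \<le> 1" if "i \<in> {1..n}" for i
      using p1 cu that unfolding P_def by (force simp: UNIV_bool)
    have "(1/2) *\<^sub>R mat 1 + sigma_dot ((r/2) *\<^sub>R c) =
       (\<Sum>i=1..n. P i * \<alpha> i) *\<^sub>R mat 1 + sigma_dot (\<Sum>i=1..n. (P i * \<alpha> i * \<eta> i) *\<^sub>R nv i)"
    proof -
      have "P_family r c True = (\<Sum>i=1..n. p c True i *\<^sub>R Pv i)" using p2 cu by blast
      then show ?thesis unfolding P_def Pv_def decomp pfam by simp
    qed
    from sd_inj[OF this] have h1: "(\<Sum>i=1..n. P i * \<alpha> i) = 1/2"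
      and h2: "(\<Sum>i=1..n. (P i * \<alpha> i * \<eta> i) *\<^sub>R nv i) = (r/2) *\<^sub>R c" by auto
    have cc1: "c \<bullet> c = 1" using cc'(2) by (simp add: norm_eq_1)
    have h3: "(\<Sum>i=1..n. P i * \<alpha> i * \<eta> i * (c \<bullet> nv i)) = r / 2"
    proof -
      have "(\<Sum>i=1..n. P i * \<alpha> i * \<eta> i * (c \<bullet> nv i)) = c \<bullet> (\<Sum>i=1..n. (P i * \<alpha> i * \<eta> i) *\<^sub>R nv i)"
        by (simp add: inner_sum_right)
      then show ?thesis using h2 cc1 by simp
    qed
    have "(\<Sum>i=1..n. (2 * P i - 1) * (\<alpha> i * (c0 + \<eta> i * (c \<bullet> nv i)))) =
       2 * c0 * (\<Sum>i=1..n. P i * \<alpha> i) - c0 * (\<Sum>i=1..n. \<alpha> i)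
       + 2 * (\<Sum>i=1..n. P i * \<alpha> i * \<eta> i * (c \<bullet> nv i)) - (\<Sum>i=1..n. \<alpha> i * \<eta> i * (c \<bullet> nv i))"
      by (simp add: algebra_simps sum.distrib sum_subtractf sum_distrib_left)
    also have "\<dots> = r" unfolding h1 h3 zero A(4) by simp
    finally have req: "r = (\<Sum>i=1..n. (2 * P i - 1) * (\<alpha> i * (c0 + \<eta> i * (c \<bullet> nv i))))" by simp
    also have "\<dots> \<le> (\<Sum>i=1..n. \<bar>\<alpha> i * (c0 + \<eta> i * (c \<bullet> nv i))\<bar>)"
    proof (rule sum_mono)
      fix i assume i: "i \<in> {1..n}"
      have "\<bar>2 * P i - 1\<bar> \<le> 1" using Pb[OF i] by auto
      then have "\<bar>(2 * P i - 1) * (\<alpha> i * (c0 + \<eta> i * (c \<bullet> nv i)))\<bar> \<le> \<bar>\<alpha> i * (c0 + \<eta> i * (c \<bullet> nv i))\<bar>"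
        by (simp add: abs_mult mult_left_le_one_le)
      then show "(2 * P i - 1) * (\<alpha> i * (c0 + \<eta> i * (c \<bullet> nv i))) \<le> \<bar>\<alpha> i * (c0 + \<eta> i * (c \<bullet> nv i))\<bar>"
        by linarith
    qed
    finally show "r \<le> f (fst cc) (snd cc)" using cc' unfolding f_def by simp
  qed
  define w where "w i = (\<alpha> i, (\<alpha> i * \<eta> i) *\<^sub>R nv i)" for i
  have exq: "\<exists>q. (\<forall>i\<in>{1..n}. -1 \<le> q i \<and> q i \<le> 1) \<and> (\<Sum>i=1..n. q i * \<alpha> i) = 0 \<and>
      (\<Sum>i=1..n. (q i * \<alpha> i * \<eta> i) *\<^sub>R nv i) = m *\<^sub>R v" if v: "norm v = 1" for v
  proof -
    define z where "z = ((0::real), m *\<^sub>R v)"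
    have zK: "z \<in> Kset {1..n} w"
    proof (rule ccontr)
      assume "z \<notin> Kset {1..n} w"
      then have "\<exists>a b. a \<bullet> z < b \<and> (\<forall>x\<in>Kset {1..n} w. b < a \<bullet> x)"
        by (intro separating_hyperplane_closed_point Kset_convex compact_imp_closed Kset_compact) auto
      then obtain a b where ab: "a \<bullet> z < b" "\<forall>x\<in>Kset {1..n} w. b < a \<bullet> x"
        by blast
      obtain e0 e where a: "a = (e0, e)" by (cases a)
      define q where "q i = - sgn (a \<bullet> w i)" for i
      have xK: "(\<Sum>i=1..n. q i *\<^sub>R w i) \<in> Kset {1..n} w" unfolding Kset_def q_def
        by (intro CollectI exI[of _ "\<lambda>i. - sgn (a \<bullet> w i)"]) (auto simp: sgn_if)
      have lt: "a \<bullet> z < a \<bullet> (\<Sum>i=1..n. q i *\<^sub>R w i)"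
        using less_trans[OF ab(1) bspec[OF ab(2) xK]] .
      have sg: "sgn x * x = \<bar>x\<bar>" for x :: real by (simp add: sgn_if)
      have "a \<bullet> (\<Sum>i=1..n. q i *\<^sub>R w i) = - (\<Sum>i=1..n. \<bar>a \<bullet> w i\<bar>)"
        by (simp add: inner_sum_right q_def sg sum_negf)
      also have "(\<Sum>i=1..n. \<bar>a \<bullet> w i\<bar>) = f (- e0) (- e)" unfolding f_def
      proof (intro sum.cong refl)
        fix i
        have "a \<bullet> w i = - (\<alpha> i * (- e0 + \<eta> i * (- e \<bullet> nv i)))"
          by (simp add: a w_def algebra_simps)
        then show "\<bar>a \<bullet> w i\<bar> = \<bar>\<alpha> i * (- e0 + \<eta> i * (- e \<bullet> nv i))\<bar>" by simp
      qed
      finally have lt2: "m * (e \<bullet> v) < - f (- e0) (- e)" using lt by (simp add: a z_def)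
      have "m * norm (- e) \<le> f (- e0) (- e)" by (rule mnorm)
      moreover have "- (e \<bullet> v) \<le> norm e" using Cauchy_Schwarz_ineq2[of e v] v by simp
      then have "m * (- (e \<bullet> v)) \<le> m * norm e" using m0 by (rule mult_left_mono)
      ultimately show False using lt2 by simp
    qed
    then obtain q where q: "\<forall>i\<in>{1..n}. -1 \<le> q i \<and> q i \<le> 1" "z = (\<Sum>i=1..n. q i *\<^sub>R w i)"
      unfolding Kset_def by blast
    have "fst z = (\<Sum>i=1..n. q i * \<alpha> i)" "snd z = (\<Sum>i=1..n. (q i * \<alpha> i * \<eta> i) *\<^sub>R nv i)"
      unfolding q(2) by (simp_all add: fst_sum snd_sum w_def mult.assoc)
    then show ?thesis using q(1) by (intro exI[of _ q]) (simp add: z_def)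
  qed
  then have "\<forall>v\<in>unit_sphere3. \<exists>q. (\<forall>i\<in>{1..n}. -1 \<le> q i \<and> q i \<le> 1) \<and> (\<Sum>i=1..n. q i * \<alpha> i) = 0 \<and>
      (\<Sum>i=1..n. (q i * \<alpha> i * \<eta> i) *\<^sub>R nv i) = m *\<^sub>R v" by (simp add: unit_sphere3_def)
  then obtain Q where Q: "\<forall>v\<in>unit_sphere3. (\<forall>i\<in>{1..n}. -1 \<le> Q v i \<and> Q v i \<le> 1) \<and> (\<Sum>i=1..n. Q v i * \<alpha> i) = 0 \<and>
      (\<Sum>i=1..n. (Q v i * \<alpha> i * \<eta> i) *\<^sub>R nv i) = m *\<^sub>R v" by (rule bchoice[elim_format]) blast
  define p where "p v a i = (1 + (if a then Q v i else - Q v i)) / 2" for v a i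
  have part1: "\<forall>x\<in>unit_sphere3. \<forall>i\<in>{1..n}. (\<forall>a\<in>UNIV. p x a i \<ge> 0) \<and> (\<Sum>a\<in>UNIV. p x a i) = 1"
  proof (intro ballI)
    fix x :: "real^3" and i assume x: "x \<in> unit_sphere3" and i: "i \<in> {1..n}"
    have "-1 \<le> Q x i \<and> Q x i \<le> 1" using Q x i by blast
    then show "(\<forall>a\<in>UNIV. p x a i \<ge> 0) \<and> (\<Sum>a\<in>UNIV. p x a i) = 1"
      by (auto simp: UNIV_bool field_simps p_def)
  qed
  have part2: "\<forall>x\<in>unit_sphere3. \<forall>a\<in>UNIV. P_family m x a = (\<Sum>i=1..n. p x a i *\<^sub>R Pv i)"
  proof (intro ballI)
    fix x :: "real^3" and a :: bool assume x: "x \<in> unit_sphere3"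
    define s :: real where "s = (if a then 1 else -1)"
    have pe: "p x a i = (1 + s * Q x i) / 2" for i by (simp add: s_def p_def)
    have Qx: "(\<Sum>i=1..n. Q x i * \<alpha> i) = 0" "(\<Sum>i=1..n. (Q x i * \<alpha> i * \<eta> i) *\<^sub>R nv i) = m *\<^sub>R x"
      using Q x by auto
    have s1: "(\<Sum>i=1..n. (1 + s * Q x i) / 2 * \<alpha> i) = 1/2"
    proof -
      have "(\<Sum>i=1..n. (1 + s * Q x i) / 2 * \<alpha> i) = (\<Sum>i=1..n. 1/2 * \<alpha> i + s/2 * (Q x i * \<alpha> i))"
        by (intro sum.cong refl) (simp add: field_simps)
      also have "\<dots> = 1/2 * (\<Sum>i=1..n. \<alpha> i) + s/2 * (\<Sum>i=1..n. Q x i * \<alpha> i)"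
        by (simp only: sum.distrib sum_distrib_left)
      finally show ?thesis using Qx A(4) by simp
    qed
    have s2: "(\<Sum>i=1..n. ((1 + s * Q x i) / 2 * \<alpha> i * \<eta> i) *\<^sub>R nv i) = ((s * m) / 2) *\<^sub>R x"
    proof -
      have "(\<Sum>i=1..n. ((1 + s * Q x i) / 2 * \<alpha> i * \<eta> i) *\<^sub>R nv i) =
         (\<Sum>i=1..n. (1/2) *\<^sub>R ((\<alpha> i * \<eta> i) *\<^sub>R nv i) + (s/2) *\<^sub>R ((Q x i * \<alpha> i * \<eta> i) *\<^sub>R nv i))"
      proof (intro sum.cong refl)
        fix i
        have ce: "(1 + s * Q x i) / 2 * \<alpha> i * \<eta> i = 1/2 * (\<alpha> i * \<eta> i) + s/2 * (Q x i * \<alpha> i * \<eta> i)"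
          by (simp add: field_simps)
        show "((1 + s * Q x i) / 2 * \<alpha> i * \<eta> i) *\<^sub>R nv i =
          (1/2) *\<^sub>R ((\<alpha> i * \<eta> i) *\<^sub>R nv i) + (s/2) *\<^sub>R ((Q x i * \<alpha> i * \<eta> i) *\<^sub>R nv i)"
          by (simp only: ce scaleR_add_left scaleR_scaleR)
      qed
      also have "\<dots> = (1/2) *\<^sub>R (\<Sum>i=1..n. (\<alpha> i * \<eta> i) *\<^sub>R nv i) + (s/2) *\<^sub>R (\<Sum>i=1..n. (Q x i * \<alpha> i * \<eta> i) *\<^sub>R nv i)"
        by (simp only: sum.distrib scaleR_sum_right)
      finally have "(\<Sum>i=1..n. ((1 + s * Q x i) / 2 * \<alpha> i * \<eta> i) *\<^sub>R nv i) =
         (1/2) *\<^sub>R (\<Sum>i=1..n. (\<alpha> i * \<eta> i) *\<^sub>R nv i) + (s/2) *\<^sub>R (\<Sum>i=1..n. (Q x i * \<alpha> i * \<eta> i) *\<^sub>R nv i)" .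
      then show ?thesis using Qx A(5) by simp
    qed
    have "(if a then m else - m) / 2 = s * m / 2" by (simp add: s_def)
    then show "P_family m x a = (\<Sum>i=1..n. p x a i *\<^sub>R Pv i)"
      unfolding Pv_def decomp pfam pe s1 s2 by simp
  qed
  have mSim: "m \<in> Sim"
    unfolding Sim_def simulates_def mem_Collect_eq using part1 part2 by blast
  have "Sup Sim = m" using mSim upper by (intro cSup_eq_maximum)
  then show ?thesis unfolding R_param_def m_eq Sim_def Pv_def by simp
qed

end
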